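(* Let $(G,\omega)$ be a weighted digraph without loops and let $V$ be its square-rooted weighted Hashimoto matrix. Then the radius of convergence $r$ of $\sum_{k=0}^\infty t^kp_k(A)$ equals $\rho(V)^{-1}$, where $\rho$ denotes spectral radius and $\rho(V)^{-1}:=\infty$ if $\rho(V)=0$.
   Context: A weighted digraph is a digraph $G=(V(G),E)$ (no loops or multiple edges) with a weight function $\omega:E\to(0,\infty)$. The weight of a walk $(e_1,\dots,e_k)$ (edges $e_r=(v_r,v_{r+1})$) is $\prod_r\omega(e_r)$; a walk is non-backtracking if $v_{r+2}\ne v_r$ for all $r$. $p_k(A)$ is the matrix whose $(i,j)$ entry is the sum of the weights of all non-backtracking walks of length $k$ from $i$ to $j$ ($p_0(A)=I$). $V$ is the $\#E\times\#E$ matrix indexed by edges with $V_{ef}=\sqrt{\omega(e)\omega(f)}$ if $e=(i,j)$, $f=(j,k)$ with $k\ne i$, and $V_{ef}=0$ otherwise. *)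

theory Defs
  imports "HOL-Analysis.Analysis" "Jordan_Normal_Form.Spectral_Radius"
begin

text \<open>A weighted digraph on the finite vertex type 'v: edge set E (a set of ordered
pairs, so no multiple edges) and weight function w, positive on E.\<close>

definition weighted_digraph :: "('v \<times> 'v) set \<Rightarrow> ('v \<times> 'v \<Rightarrow> real) \<Rightarrow> bool" where
  "weighted_digraph E w \<longleftrightarrow> (\<forall>i. (i, i) \<notin> E) \<and> (\<forall>e\<in>E. w e > 0)"

definition nb_walks :: "('v \<times> 'v) set \<Rightarrow> nat \<Rightarrow> 'v \<Rightarrow> 'v \<Rightarrow> 'v list set" where
  "nb_walks E k i j = {vs. length vs = Suc k \<and> vs ! 0 = i \<and> vs ! k = j
      \<and> (\<forall>r<k. (vs ! r, vs ! Suc r) \<in> E)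
      \<and> (\<forall>r. r + 2 \<le> k \<longrightarrow> vs ! (r + 2) \<noteq> vs ! r)}"

definition walk_weight :: "('v \<times> 'v \<Rightarrow> real) \<Rightarrow> 'v list \<Rightarrow> real" where
  "walk_weight w vs = (\<Prod>r<length vs - 1. w (vs ! r, vs ! Suc r))"

definition nb_matrix :: "('v \<times> 'v) set \<Rightarrow> ('v \<times> 'v \<Rightarrow> real) \<Rightarrow> nat \<Rightarrow> real ^ 'v ^ 'v" where
  "nb_matrix E w k = (\<chi> i j. \<Sum>vs\<in>nb_walks E k i j. walk_weight w vs)"

definition hashimoto_entry :: "('v \<times> 'v \<Rightarrow> real) \<Rightarrow> ('v \<times> 'v) \<Rightarrow> ('v \<times> 'v) \<Rightarrow> real" where
  "hashimoto_entry w e f =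
     (if snd e = fst f \<and> snd f \<noteq> fst e then sqrt (w e * w f) else 0)"

definition edge_list :: "('v \<times> 'v) set \<Rightarrow> ('v \<times> 'v) list" where
  "edge_list E = (SOME es. distinct es \<and> set es = E)"

definition hashimoto_mat :: "('v \<times> 'v) set \<Rightarrow> ('v \<times> 'v \<Rightarrow> real) \<Rightarrow> complex mat" where
  "hashimoto_mat E w =
     Matrix.mat (card E) (card E)
       (\<lambda>(a, b). complex_of_real (hashimoto_entry w (edge_list E ! a) (edge_list E ! b)))"

definition spec_rad :: "complex mat \<Rightarrow> real" where
  "spec_rad M = (if dim_row M = 0 then 0 else spectral_radius M)"

end

theory Submission
  imports Defs
begin


lemma smult_mat_vec: "A \<in> carrier_mat n n \<Longrightarrow> v \<in> carrier_vec n \<Longrightarrow> (c \<cdot>\<^sub>m A) *\<^sub>v v = (c::complex) \<cdot>\<^sub>v (A *\<^sub>v v)"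
  by (rule eq_vecI) (auto simp: scalar_prod_def sum_distrib_left mult.assoc)

lemma smult_pow_mat: "A \<in> carrier_mat n n \<Longrightarrow> (c \<cdot>\<^sub>m A) ^\<^sub>m k = (c::complex)^k \<cdot>\<^sub>m (A ^\<^sub>m k)"
proof (induction k)
  case 0 then show ?case by (auto intro!: eq_matI)
next
  case (Suc k)
  have "(c \<cdot>\<^sub>m A) ^\<^sub>m Suc k = (c^k \<cdot>\<^sub>m (A ^\<^sub>m k)) * (c \<cdot>\<^sub>m A)" using Suc by simp
  also have "\<dots> = c^Suc k \<cdot>\<^sub>m (A ^\<^sub>m Suc k)"
    using Suc.prems by (auto intro!: eq_matI simp: scalar_prod_def sum_distrib_left mult_ac)
  finally show ?case .
qed

lemma spec_upper:
  fixes A :: "complex mat"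
  assumes A: "A \<in> carrier_mat n n" and r: "r > 0" and sr: "n > 0 \<Longrightarrow> spectral_radius A < r"
  shows "\<exists>C. \<forall>k i j. i < n \<longrightarrow> j < n \<longrightarrow> norm ((A ^\<^sub>m k) $$ (i,j)) \<le> C * r^k"
proof (cases "n = 0")
  case True then show ?thesis by auto
next
  case False
  define B where "B = complex_of_real (1/r) \<cdot>\<^sub>m A"
  have B: "B \<in> carrier_mat n n" using A by (simp add: B_def)
  have "spectral_radius B < 1"
  proof -
    from spectral_radius_mem_max(1)[OF B] False obtain mu where mu: "mu \<in> spectrum B"
      and eq: "spectral_radius B = norm mu" by auto
    from mu obtain v where ev: "eigenvector B v mu" unfolding spectrum_def eigenvalue_def by auto
    have AB: "A = complex_of_real r \<cdot>\<^sub>m B" using A r unfolding B_def by (auto intro!: eq_matI)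
    have v: "v \<in> carrier_vec n" "v \<noteq> 0\<^sub>v n" "B *\<^sub>v v = mu \<cdot>\<^sub>v v" using ev B unfolding eigenvector_def by auto
    have "A *\<^sub>v v = (complex_of_real r * mu) \<cdot>\<^sub>v v"
      unfolding AB using smult_mat_vec[OF B v(1)] v(3) by (simp add: smult_smult_assoc)
    hence "eigenvector A v (complex_of_real r * mu)" using v A unfolding eigenvector_def by auto
    hence "complex_of_real r * mu \<in> spectrum A" unfolding spectrum_def eigenvalue_def by auto
    hence "norm (complex_of_real r * mu) \<le> spectral_radius A"
      using spectral_radius_mem_max(2)[OF A] False by auto
    hence "r * norm mu \<le> spectral_radius A" using r by (simp add: norm_mult)
    with sr False have "r * norm mu < r * 1" by linarith
    hence "norm mu < 1" using r by (metis mult_less_cancel_left_pos)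
    with eq show ?thesis by simp
  qed
  from spectral_radius_jnf_norm_bound_less_1_upper_triangular[OF B this] obtain C
    where C: "\<And>k. norm_bound (B ^\<^sub>m k) C" by auto
  show ?thesis
  proof (intro exI allI impI)
    fix k i j assume ij: "i < n" "j < n"
    have "(B ^\<^sub>m k) $$ (i,j) = complex_of_real (1/r)^k * (A ^\<^sub>m k) $$ (i,j)"
      unfolding B_def smult_pow_mat[OF A] using ij A by simp
    moreover have "norm ((B ^\<^sub>m k) $$ (i,j)) \<le> C" using C[of k] ij B unfolding norm_bound_def by auto
    ultimately have "(1/r)^k * norm ((A ^\<^sub>m k) $$ (i,j)) \<le> C"
      using r by (simp add: norm_mult norm_power norm_divide)
    thus "norm ((A ^\<^sub>m k) $$ (i,j)) \<le> C * r^k" using r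
      by (simp add: field_simps power_divide)
  qed
qed

lemma ex_argmax_nat: "(n::nat) > 0 \<Longrightarrow> \<exists>i<n. \<forall>j<n. (f j::real) \<le> f i"
proof (induction n)
  case 0 then show ?case by simp
next
  case (Suc n)
  show ?case
  proof (cases "n = 0")
    case True then show ?thesis by auto
  next
    case False
    with Suc obtain i where i: "i < n" "\<forall>j<n. f j \<le> f i" by auto
    show ?thesis
    proof (cases "f n \<le> f i")
      case True then show ?thesis using i by (intro exI[of _ i]) (auto simp: less_Suc_eq)
    next
      case False then show ?thesis using i by (intro exI[of _ n]) (auto simp: less_Suc_eq)
    qed
  qed
qed

lemma spec_lower:
  fixes A :: "complex mat"
  assumes A: "A \<in> carrier_mat n n" and n: "n > 0"
  shows "\<exists>i<n. \<exists>j<n. spectral_radius A ^ k \<le> real n * norm ((A ^\<^sub>m k) $$ (i,j))"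
proof -
  from spectral_radius_mem_max(1)[OF A n] obtain lam where lam: "lam \<in> spectrum A"
    and eq: "spectral_radius A = norm lam" by auto
  from lam obtain v where ev: "eigenvector A v lam" unfolding spectrum_def eigenvalue_def by auto
  have v: "v \<in> carrier_vec n" "v \<noteq> 0\<^sub>v n" using ev A unfolding eigenvector_def by auto
  have pw: "A ^\<^sub>m k *\<^sub>v v = lam^k \<cdot>\<^sub>v v" by (rule eigenvector_pow[OF A ev])
  obtain i where i: "i < n" and imax: "\<And>j. j < n \<Longrightarrow> norm (v $ j) \<le> norm (v $ i)"
    using ex_argmax_nat[OF n, of "\<lambda>j. norm (v $ j)"] by blast
  have vi: "norm (v $ i) > 0"
  proof (rule ccontr)
    assume "\<not> norm (v $ i) > 0"
    hence "\<And>j. j < n \<Longrightarrow> v $ j = 0" using imax by (meson norm_le_zero_iff order_trans not_less)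
    hence "v = 0\<^sub>v n" using v(1) by (auto intro!: eq_vecI)
    with v(2) show False by simp
  qed
  obtain j where j: "j < n" and jmax: "\<And>l. l < n \<Longrightarrow> norm ((A ^\<^sub>m k) $$ (i,l)) \<le> norm ((A ^\<^sub>m k) $$ (i,j))"
    using ex_argmax_nat[OF n, of "\<lambda>l. norm ((A ^\<^sub>m k) $$ (i,l))"] by blast
  have "lam^k * v $ i = (A ^\<^sub>m k *\<^sub>v v) $ i" using pw i v by simp
  also have "\<dots> = (\<Sum>l<n. (A ^\<^sub>m k) $$ (i,l) * v $ l)"
    using i v A by (simp add: scalar_prod_def lessThan_atLeast0)
  finally have "norm (lam^k * v $ i) = norm (\<Sum>l<n. (A ^\<^sub>m k) $$ (i,l) * v $ l)" by simp
  also have "\<dots> \<le> (\<Sum>l<n. norm ((A ^\<^sub>m k) $$ (i,l)) * norm (v $ i))"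
    by (rule order_trans[OF norm_sum sum_mono]) (auto simp: norm_mult intro!: mult_left_mono imax)
  also have "\<dots> \<le> (\<Sum>l<n. norm ((A ^\<^sub>m k) $$ (i,j))) * norm (v $ i)"
    unfolding sum_distrib_right by (rule sum_mono) (auto intro!: mult_right_mono jmax)
  finally have "norm lam ^ k * norm (v $ i) \<le> (real n * norm ((A ^\<^sub>m k) $$ (i,j))) * norm (v $ i)"
    by (simp add: norm_mult norm_power)
  hence "norm lam ^ k \<le> real n * norm ((A ^\<^sub>m k) $$ (i,j))" using vi by simp
  thus ?thesis using i j eq by auto
qed



definition Qw :: "('v \<times> 'v) set \<Rightarrow> ('v \<times> 'v \<Rightarrow> real) \<Rightarrow> nat \<Rightarrow> 'v \<Rightarrow> 'v \<times> 'v \<Rightarrow> real" where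
  "Qw E w k i f = (\<Sum>vs \<in> {vs \<in> nb_walks E k i (snd f). vs ! (k-1) = fst f}. walk_weight w vs)"

lemma finite_nbw: "finite (nb_walks (E::('v::finite \<times> 'v) set) k i j)"
proof -
  have "nb_walks E k i j \<subseteq> {xs. set xs \<subseteq> UNIV \<and> length xs = Suc k}" unfolding nb_walks_def by auto
  thus ?thesis using finite_lists_length_eq[of "UNIV :: 'v set" "Suc k"] finite_subset by auto
qed

lemma nb_P:
  fixes E :: "('v::finite \<times> 'v) set"
  assumes k: "k \<ge> 1"
  shows "nb_matrix E w k $ i $ j = (\<Sum>f\<in>E. if snd f = j then Qw E w k i f else 0)"
proof -
  have "(\<Sum>f\<in>E. if snd f = j then Qw E w k i f else 0) = (\<Sum>f\<in>{f\<in>E. snd f = j}. Qw E w k i f)"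
    by (simp add: sum.inter_filter)
  also have "\<dots> = (\<Sum>f\<in>{f\<in>E. snd f = j}. \<Sum>vs\<in>{vs\<in>nb_walks E k i j. (vs!(k-1), j) = f}. walk_weight w vs)"
    unfolding Qw_def by (intro sum.cong refl arg_cong[where f="\<lambda>S. sum _ S"]) auto
  also have "\<dots> = (\<Sum>vs\<in>nb_walks E k i j. walk_weight w vs)"
  proof (rule sum.group)
    show "finite (nb_walks E k i j)" by (rule finite_nbw)
    show "finite {f \<in> E. snd f = j}" by simp
    have "(vs ! (k - 1), j) \<in> E" if vs: "vs \<in> nb_walks E k i j" for vs
    proof -
      have "\<forall>r<k. (vs ! r, vs ! Suc r) \<in> E" using vs unfolding nb_walks_def by auto
      hence "(vs ! (k-1), vs ! Suc (k-1)) \<in> E" using k by (metis diff_less less_numeral_extra(1) order_less_le_trans)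
      moreover have "vs ! Suc (k-1) = j" using vs k unfolding nb_walks_def by auto
      ultimately show "(vs ! (k - 1), j) \<in> E" by simp
    qed
    thus "(\<lambda>vs. (vs ! (k - 1), j)) ` nb_walks E k i j \<subseteq> {f \<in> E. snd f = j}" by auto
  qed
  finally show ?thesis by (simp add: nb_matrix_def)
qed

lemma len2: "length vs = 2 \<Longrightarrow> vs = [vs!0, vs!1]"
  by (cases vs; cases "tl vs") auto


lemma Q1:
  fixes E :: "('v::finite \<times> 'v) set"
  shows "Qw E w 1 i f = (if f \<in> E \<and> fst f = i then w f else 0)"
proof -
  obtain c d where f: "f = (c,d)" by force
  have mem: "length vs = 2 \<and> vs!0 = i \<and> vs!1 = d \<and> (vs!0, vs!1) \<in> E"
    if "vs \<in> nb_walks E 1 i d" for vs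
  proof -
    have h: "length vs = Suc 1 \<and> vs!0 = i \<and> vs!1 = d \<and> (\<forall>r<1. (vs!r, vs!Suc r)\<in>E)"
      using that unfolding nb_walks_def by (simp only: mem_Collect_eq) blast
    hence h1: "\<forall>r<1. (vs!r, vs!Suc r)\<in>E" and a: "length vs = 2" "vs!0 = i" "vs!1 = d" by auto
    from h1 have e: "(vs!0, vs!1) \<in> E" by auto
    from e a show ?thesis by blast
  qed
  have S: "{vs \<in> nb_walks E 1 i d. vs ! 0 = c} = (if (c,d) \<in> E \<and> c = i then {[i,d]} else {})"
  proof (cases "(c,d) \<in> E \<and> c = i")
    case True
    have A: "vs = [i,d]" if "vs \<in> nb_walks E 1 i d" for vs
    proof -
      have l: "length vs = 2" "vs!0 = i" "vs!1 = d" using mem[OF that] by auto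
      have "vs = [vs!0, vs!1]" by (rule len2[OF l(1)])
      also have "\<dots> = [i,d]" using l by simp
      finally show ?thesis .
    qed
    from True have ci: "c = i" by (rule conjunct2)
    from True have "(c,d) \<in> E" by (rule conjunct1)
    hence cd: "(i,d) \<in> E" unfolding ci .
    have B: "[i,d] \<in> nb_walks E 1 i d"
      unfolding nb_walks_def using cd by simp
    have C: "[i,d] ! 0 = c" using ci by simp
    have "{vs \<in> nb_walks E 1 i d. vs ! 0 = c} = {[i,d]}"
    proof (intro Set.set_eqI iffI)
      fix x assume "x \<in> {vs \<in> nb_walks E 1 i d. vs ! 0 = c}"
      thus "x \<in> {[i,d]}" using A by blast
    next
      fix x assume "x \<in> {[i,d]}"
      thus "x \<in> {vs \<in> nb_walks E 1 i d. vs ! 0 = c}" using B C by blast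
    qed
    thus ?thesis using ci cd by simp
  next
    case False
    have "False" if "vs \<in> nb_walks E 1 i d" "vs!0 = c" for vs
      using mem[OF that(1)] that(2) False by metis
    hence "{vs \<in> nb_walks E 1 i d. vs ! 0 = c} = {}" by auto
    thus ?thesis by (subst if_not_P[OF False])
  qed
  have Q: "Qw E w 1 i f = (\<Sum>vs\<in>{vs \<in> nb_walks E 1 i d. vs ! 0 = c}. walk_weight w vs)"
    unfolding Qw_def f by simp
  show ?thesis
  proof (cases "(c,d) \<in> E \<and> c = i")
    case True
    from True have ci: "c = i" by (rule conjunct2)
    from True have "(c,d) \<in> E" by (rule conjunct1)
    hence cd: "(i,d) \<in> E" unfolding ci .
    have "Qw E w 1 i f = walk_weight w [i,d]" unfolding Q S using ci cd by simp
    also have "\<dots> = w (i,d)" by (simp add: walk_weight_def)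
    finally show ?thesis using ci cd f by simp
  next
    case False
    have q0: "Qw E w 1 i f = 0" unfolding Q S by (subst if_not_P[OF False]) simp
    have nf: "\<not> (f \<in> E \<and> fst f = i)" using False f by simp
    show ?thesis by (subst if_not_P[OF nf]) (rule q0)
  qed
qed
lemma nbD: "vs \<in> nb_walks E k i j \<Longrightarrow> length vs = Suc k \<and> vs ! 0 = i \<and> vs ! k = j
      \<and> (\<forall>r<k. (vs ! r, vs ! Suc r) \<in> E)
      \<and> (\<forall>r. r + 2 \<le> k \<longrightarrow> vs ! (r + 2) \<noteq> vs ! r)"
  by (simp only: nb_walks_def mem_Collect_eq) blast

lemma take_last: "length xs = Suc n \<Longrightarrow> xs = take n xs @ [xs ! n]"
  by (metis lessI take_Suc_conv_app_nth take_all order_refl)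

lemma Q_Suc:
  fixes E :: "('v::finite \<times> 'v) set"
  assumes k: "k \<ge> 1"
  shows "Qw E w (Suc k) i f = (if f \<in> E then w f * (\<Sum>g\<in>E. if snd g = fst f \<and> fst g \<noteq> snd f then Qw E w k i g else 0) else 0)"
proof -
  obtain c d where f: "f = (c,d)" by force
  define S where "S = {vs \<in> nb_walks E k i c. vs!(k-1) \<noteq> d}"
  have Q: "Qw E w (Suc k) i f = (\<Sum>vs\<in>{vs\<in>nb_walks E (Suc k) i d. vs!k = c}. walk_weight w vs)"
    unfolding Qw_def f by simp
  have fwd: "(c,d) \<in> E \<and> take (Suc k) vs \<in> S \<and> vs = take (Suc k) vs @ [d]"
    if vs: "vs \<in> nb_walks E (Suc k) i d" "vs!k = c" for vs
  proof -
    have len: "length vs = Suc (Suc k)" and v0: "vs!0 = i" and vl: "vs ! Suc k = d"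
      and ed: "\<forall>r<Suc k. (vs!r, vs!Suc r) \<in> E" and nb: "\<forall>r. r + 2 \<le> Suc k \<longrightarrow> vs!(r+2) \<noteq> vs!r"
      using nbD[OF vs(1)] by blast+
    have "(vs!k, vs!Suc k) \<in> E" using ed by simp
    hence cd: "(c,d) \<in> E" using vs(2) vl by simp
    define u where "u = take (Suc k) vs"
    have lu: "length u = Suc k" using len unfolding u_def by simp
    have un: "u ! r = vs ! r" if "r < Suc k" for r using that unfolding u_def by simp
    from nb have "k-1+2 \<le> Suc k \<longrightarrow> vs!(k-1+2) \<noteq> vs!(k-1)" by (rule spec)
    moreover have "k-1+2 = Suc k" using k by simp
    ultimately have "vs!(Suc k) \<noteq> vs!(k-1)" by simp
    hence "d \<noteq> vs!(k-1)" using vl by simp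
    hence u1: "u!(k-1) \<noteq> d" using un[of "k-1"] k by auto
    have "u \<in> nb_walks E k i c" unfolding nb_walks_def
    proof (intro CollectI conjI allI impI)
      show "length u = Suc k" by (rule lu)
      show "u!0 = i" using un[of 0] v0 by simp
      show "u!k = c" using un[of k] vs(2) by simp
      fix r
      { assume "r < k" thus "(u!r, u!Suc r) \<in> E" using un[of r] un[of "Suc r"] ed by simp }
      { assume "r + 2 \<le> k" thus "u!(r+2) \<noteq> u!r" using un[of r] un[of "r+2"] nb by simp }
    qed
    hence "u \<in> S" using u1 unfolding S_def by simp
    moreover have "vs = u @ [d]" using take_last[OF len] vl unfolding u_def by simp
    ultimately show ?thesis using cd unfolding u_def by simp
  qed
  have bwd: "vs @ [d] \<in> nb_walks E (Suc k) i d \<and> (vs @ [d]) ! k = c"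
    if vs: "vs \<in> S" and cd: "(c,d) \<in> E" for vs
  proof -
    have len: "length vs = Suc k" and v0: "vs!0 = i" and vl: "vs ! k = c"
      and ed: "\<forall>r<k. (vs!r, vs!Suc r) \<in> E" and nb: "\<forall>r. r + 2 \<le> k \<longrightarrow> vs!(r+2) \<noteq> vs!r"
      and bt: "vs!(k-1) \<noteq> d"
      using vs nbD[of vs E k i c] unfolding S_def by blast+
    have un: "(vs @ [d]) ! r = vs ! r" if "r < Suc k" for r using that len by (simp add: nth_append)
    have ul: "(vs @ [d]) ! Suc k = d" using len by (simp add: nth_append)
    have "vs @ [d] \<in> nb_walks E (Suc k) i d" unfolding nb_walks_def
    proof (intro CollectI conjI allI impI)
      show "length (vs @ [d]) = Suc (Suc k)" using len by simp
      show "(vs @ [d])!0 = i" using un[of 0] v0 by simp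
      show "(vs @ [d])! Suc k = d" by (rule ul)
      fix r
      { assume r: "r < Suc k"
        show "((vs @ [d])!r, (vs @ [d])!Suc r) \<in> E"
        proof (cases "r < k")
          case True thus ?thesis using un[of r] un[of "Suc r"] ed by simp
        next
          case False hence "r = k" using r by simp
          thus ?thesis using un[of k] ul vl cd by simp
        qed }
      { assume r: "r + 2 \<le> Suc k"
        show "(vs @ [d])!(r+2) \<noteq> (vs @ [d])!r"
        proof (cases "r + 2 \<le> k")
          case True thus ?thesis using un[of r] un[of "r+2"] nb by simp
        next
          case False hence "r = k - 1" using r by simp
          thus ?thesis using un[of "k-1"] ul bt k by (simp add: numeral_2_eq_2)
        qed }
    qed
    thus ?thesis using un[of k] vl by simp
  qed
  have wt: "walk_weight w (vs @ [d]) = walk_weight w vs * w (c,d)" if vs: "vs \<in> S" for vs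
  proof -
    have len: "length vs = Suc k" and vl: "vs ! k = c"
      using vs nbD[of vs E k i c] unfolding S_def by blast+
    have "walk_weight w (vs @ [d]) = (\<Prod>r<Suc k. w ((vs @ [d]) ! r, (vs @ [d]) ! Suc r))"
      unfolding walk_weight_def using len by simp
    also have "\<dots> = (\<Prod>r<k. w ((vs @ [d]) ! r, (vs @ [d]) ! Suc r)) * w ((vs @ [d]) ! k, (vs @ [d]) ! Suc k)"
      by simp
    also have "(\<Prod>r<k. w ((vs @ [d]) ! r, (vs @ [d]) ! Suc r)) = (\<Prod>r<k. w (vs ! r, vs ! Suc r))"
      using len by (intro prod.cong) (auto simp: nth_append)
    also have "w ((vs @ [d]) ! k, (vs @ [d]) ! Suc k) = w (c,d)" using len vl by (simp add: nth_append)
    finally show ?thesis unfolding walk_weight_def using len by simp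
  qed
  have finS: "finite S" unfolding S_def using finite_nbw[of E k i c] by simp
  have sumS: "(\<Sum>vs\<in>S. walk_weight w vs) = (\<Sum>g\<in>E. if snd g = c \<and> fst g \<noteq> d then Qw E w k i g else 0)"
  proof -
    have "(\<Sum>g\<in>E. if snd g = c \<and> fst g \<noteq> d then Qw E w k i g else 0)
        = (\<Sum>g\<in>{g\<in>E. snd g = c \<and> fst g \<noteq> d}. Qw E w k i g)"
      by (simp add: sum.inter_filter)
    also have "\<dots> = (\<Sum>g\<in>{g\<in>E. snd g = c \<and> fst g \<noteq> d}. \<Sum>vs\<in>{vs\<in>S. (vs!(k-1), c) = g}. walk_weight w vs)"
      unfolding Qw_def S_def by (intro sum.cong refl arg_cong[where f="\<lambda>S. sum _ S"]) auto
    also have "\<dots> = (\<Sum>vs\<in>S. walk_weight w vs)"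
    proof (rule sum.group)
      show "finite S" by (rule finS)
      show "finite {g\<in>E. snd g = c \<and> fst g \<noteq> d}" by simp
      have H: "(vs ! (k - 1), c) \<in> E \<and> vs ! (k-1) \<noteq> d" if vs: "vs \<in> S" for vs
      proof -
        have "\<forall>r<k. (vs ! r, vs ! Suc r) \<in> E" "vs ! k = c" "vs!(k-1) \<noteq> d"
          using vs unfolding S_def nb_walks_def by auto
        thus ?thesis using k by (metis Suc_diff_1 diff_less less_numeral_extra(1) order_less_le_trans)
      qed
      show "(\<lambda>vs. (vs ! (k - 1), c)) ` S \<subseteq> {g\<in>E. snd g = c \<and> fst g \<noteq> d}"
      proof (rule image_subsetI)
        fix vs assume "vs \<in> S"
        from H[OF this] show "(vs ! (k - 1), c) \<in> {g\<in>E. snd g = c \<and> fst g \<noteq> d}" by simp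
      qed
    qed
    finally show ?thesis by simp
  qed
  show ?thesis
  proof (cases "f \<in> E")
    case True
    hence cd: "(c,d) \<in> E" using f by simp
    have set: "{vs\<in>nb_walks E (Suc k) i d. vs!k = c} = (\<lambda>vs. vs @ [d]) ` S"
    proof (intro Set.set_eqI iffI)
      fix x assume "x \<in> {vs\<in>nb_walks E (Suc k) i d. vs!k = c}"
      hence "take (Suc k) x \<in> S" "x = take (Suc k) x @ [d]" using fwd by auto
      thus "x \<in> (\<lambda>vs. vs @ [d]) ` S" by blast
    next
      fix x assume "x \<in> (\<lambda>vs. vs @ [d]) ` S"
      then obtain vs where "vs \<in> S" "x = vs @ [d]" by blast
      thus "x \<in> {vs\<in>nb_walks E (Suc k) i d. vs!k = c}" using bwd cd by auto
    qed
    have inj: "inj_on (\<lambda>vs. vs @ [d]) S" by (auto intro: inj_onI)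
    have "Qw E w (Suc k) i f = (\<Sum>vs\<in>S. walk_weight w (vs @ [d]))"
      unfolding Q set by (simp add: sum.reindex[OF inj])
    also have "\<dots> = (\<Sum>vs\<in>S. walk_weight w vs * w (c,d))" by (rule sum.cong) (auto simp: wt)
    also have "\<dots> = w f * (\<Sum>vs\<in>S. walk_weight w vs)" by (simp add: sum_distrib_right f mult.commute)
    finally show ?thesis unfolding sumS using True f by simp
  next
    case False
    hence "(c,d) \<notin> E" using f by simp
    hence "{vs\<in>nb_walks E (Suc k) i d. vs!k = c} = {}" using fwd by blast
    hence "Qw E w (Suc k) i f = 0" unfolding Q by (simp only: sum.empty)
    thus ?thesis using False by simp
  qed
qed



fun Vp :: "('v \<times> 'v) set \<Rightarrow> ('v \<times> 'v \<Rightarrow> real) \<Rightarrow> nat \<Rightarrow> 'v \<times> 'v \<Rightarrow> 'v \<times> 'v \<Rightarrow> real" where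
  "Vp E w 0 e f = (if e = f then 1 else 0)"
| "Vp E w (Suc k) e f = (\<Sum>g\<in>E. Vp E w k e g * hashimoto_entry w g f)"

definition uu :: "('v \<times> 'v) set \<Rightarrow> ('v \<times> 'v \<Rightarrow> real) \<Rightarrow> nat \<Rightarrow> 'v \<Rightarrow> 'v \<times> 'v \<Rightarrow> real" where
  "uu E w k i f = (\<Sum>g\<in>E. (if fst g = i then sqrt (w g) else 0) * Vp E w k g f)"

lemma wpos: "weighted_digraph E w \<Longrightarrow> g \<in> E \<Longrightarrow> w g > 0"
  unfolding weighted_digraph_def by blast

lemma Vp_nonneg: "weighted_digraph E w \<Longrightarrow> f \<in> E \<Longrightarrow> Vp E w k e f \<ge> 0"
proof (induction k arbitrary: f)
  case 0 then show ?case by simp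
next
  case (Suc k)
  have "hashimoto_entry w g f \<ge> 0" if "g \<in> E" for g
    using wpos[OF Suc.prems(1) that] wpos[OF Suc.prems] unfolding hashimoto_entry_def by auto
  thus ?case unfolding Vp.simps
    by (intro sum_nonneg mult_nonneg_nonneg Suc.IH Suc.prems(1)) auto
qed

lemma Q_u:
  fixes E :: "('v::finite \<times> 'v) set"
  assumes wd: "weighted_digraph E w"
  shows "f \<in> E \<Longrightarrow> Qw E w (Suc k) i f = sqrt (w f) * uu E w k i f"
proof (induction k arbitrary: f)
  case 0
  have wf: "w f > 0" using wpos[OF wd 0] .
  have "uu E w 0 i f = (\<Sum>g\<in>E. if g = f then (if fst g = i then sqrt (w g) else 0) else 0)"
    unfolding uu_def by (intro sum.cong refl) auto
  also have "\<dots> = (if fst f = i then sqrt (w f) else 0)" using 0 by (simp add: sum.delta)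
  finally have "uu E w 0 i f = (if fst f = i then sqrt (w f) else 0)" .
  moreover have "Qw E w (Suc 0) i f = (if fst f = i then w f else 0)" using Q1[of E w i f] 0 by simp
  ultimately show ?case using wf by (simp add: real_sqrt_mult_self)
next
  case (Suc k)
  have wf: "w f > 0" using wpos[OF wd Suc.prems] .
  let ?cond = "\<lambda>g. snd g = fst f \<and> fst g \<noteq> snd f"
  have "Qw E w (Suc (Suc k)) i f = w f * (\<Sum>g\<in>E. if ?cond g then Qw E w (Suc k) i g else 0)"
    using Q_Suc[of "Suc k" E w i f] Suc.prems by simp
  also have "\<dots> = w f * (\<Sum>g\<in>E. if ?cond g then sqrt (w g) * uu E w k i g else 0)"
    by (intro arg_cong[where f="\<lambda>x. w f * x"] sum.cong refl) (auto simp: Suc.IH)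
  finally have L: "Qw E w (Suc (Suc k)) i f = w f * (\<Sum>g\<in>E. if ?cond g then sqrt (w g) * uu E w k i g else 0)" .
  have "uu E w (Suc k) i f = (\<Sum>h\<in>E. \<Sum>g\<in>E. (if fst h = i then sqrt (w h) else 0) * (Vp E w k h g * hashimoto_entry w g f))"
    unfolding uu_def Vp.simps by (simp add: sum_distrib_left)
  also have "\<dots> = (\<Sum>g\<in>E. \<Sum>h\<in>E. (if fst h = i then sqrt (w h) else 0) * Vp E w k h g * hashimoto_entry w g f)"
    by (subst sum.swap) (simp add: mult.assoc)
  also have "\<dots> = (\<Sum>g\<in>E. uu E w k i g * hashimoto_entry w g f)"
    unfolding uu_def by (simp add: sum_distrib_right)
  finally have R: "uu E w (Suc k) i f = (\<Sum>g\<in>E. uu E w k i g * hashimoto_entry w g f)" .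
  have "sqrt (w f) * uu E w (Suc k) i f = (\<Sum>g\<in>E. sqrt (w f) * (uu E w k i g * hashimoto_entry w g f))"
    unfolding R by (simp add: sum_distrib_left)
  also have "\<dots> = (\<Sum>g\<in>E. w f * (if ?cond g then sqrt (w g) * uu E w k i g else 0))"
  proof (intro sum.cong refl)
    fix g assume "g \<in> E"
    show "sqrt (w f) * (uu E w k i g * hashimoto_entry w g f) = w f * (if ?cond g then sqrt (w g) * uu E w k i g else 0)"
    proof (cases "?cond g")
      case True
      hence "hashimoto_entry w g f = sqrt (w g) * sqrt (w f)"
        unfolding hashimoto_entry_def by (auto simp: real_sqrt_mult)
      moreover have "sqrt (w f) * sqrt (w f) = w f" using wf by (simp add: real_sqrt_mult_self)
      ultimately show ?thesis using True by (simp add: algebra_simps)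
    next
      case False
      hence "hashimoto_entry w g f = 0" unfolding hashimoto_entry_def by auto
      thus ?thesis by (subst if_not_P[OF False]) simp
    qed
  qed
  also have "\<dots> = Qw E w (Suc (Suc k)) i f" unfolding L by (simp add: sum_distrib_left)
  finally show ?case by simp
qed



lemma edge_list: assumes "finite E" shows "distinct (edge_list E) \<and> set (edge_list E) = E"
proof -
  have "\<exists>es. distinct es \<and> set es = E" using finite_distinct_list[OF assms] by blast
  thus ?thesis unfolding edge_list_def by (rule someI_ex)
qed

lemma edge_list_len: "finite E \<Longrightarrow> length (edge_list E) = card E"
  using edge_list distinct_card by metis

lemma sum_set_nth: "distinct es \<Longrightarrow> (\<Sum>g\<in>set es. F g) = (\<Sum>l<length es. F (es!l))"
  by (simp add: sum.distinct_set_conv_list sum_list_sum_nth atLeast0LessThan)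

lemma hm_carrier: "hashimoto_mat E w \<in> carrier_mat (card E) (card E)"
  by (simp add: hashimoto_mat_def)

lemma mat_Vp:
  assumes fin: "finite E"
  shows "a < card E \<Longrightarrow> b < card E \<Longrightarrow>
    (hashimoto_mat E w ^\<^sub>m k) $$ (a,b) = complex_of_real (Vp E w k (edge_list E ! a) (edge_list E ! b))"
proof (induction k arbitrary: b)
  case 0
  have d: "distinct (edge_list E)" using edge_list[OF fin] by simp
  have "(edge_list E ! a = edge_list E ! b) = (a = b)"
    using 0 edge_list_len[OF fin] d by (simp add: nth_eq_iff_index_eq)
  then show ?case using 0 hm_carrier[of E w] by simp
next
  case (Suc k)
  let ?M = "hashimoto_mat E w" and ?es = "edge_list E" and ?N = "card E"
  have M: "?M \<in> carrier_mat ?N ?N" by (rule hm_carrier)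
  have d: "distinct ?es" and s: "set ?es = E" using edge_list[OF fin] by auto
  have l: "length ?es = ?N" using edge_list_len[OF fin] .
  have "(?M ^\<^sub>m Suc k) $$ (a,b) = (\<Sum>l<?N. (?M ^\<^sub>m k) $$ (a,l) * ?M $$ (l,b))"
    using Suc.prems M by (simp add: scalar_prod_def atLeast0LessThan)
  also have "\<dots> = (\<Sum>l<?N. complex_of_real (Vp E w k (?es!a) (?es!l) * hashimoto_entry w (?es!l) (?es!b)))"
  proof (intro sum.cong refl)
    fix l assume "l \<in> {..<?N}"
    hence lN: "l < ?N" by simp
    have e: "?M $$ (l,b) = complex_of_real (hashimoto_entry w (?es!l) (?es!b))"
      using lN Suc.prems unfolding hashimoto_mat_def by simp
    show "(?M ^\<^sub>m k) $$ (a,l) * ?M $$ (l,b) = complex_of_real (Vp E w k (?es!a) (?es!l) * hashimoto_entry w (?es!l) (?es!b))"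
      unfolding e Suc.IH[OF Suc.prems(1) lN] by simp
  qed
  also have "\<dots> = complex_of_real (\<Sum>l<length ?es. Vp E w k (?es!a) (?es!l) * hashimoto_entry w (?es!l) (?es!b))"
    unfolding l by simp
  also have "(\<Sum>l<length ?es. Vp E w k (?es!a) (?es!l) * hashimoto_entry w (?es!l) (?es!b))
      = (\<Sum>g\<in>E. Vp E w k (?es!a) g * hashimoto_entry w g (?es!b))"
    using sum_set_nth[OF d, of "\<lambda>g. Vp E w k (?es!a) g * hashimoto_entry w g (?es!b)"] s by simp
  finally show ?case by simp
qed



lemma p_formula:
  fixes E :: "('v::finite \<times> 'v) set"
  assumes wd: "weighted_digraph E w"
  shows "nb_matrix E w (Suc k) $ i $ j = (\<Sum>f\<in>E. if snd f = j then sqrt (w f) * uu E w k i f else 0)"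
  unfolding nb_P[of "Suc k", simplified]
  by (intro sum.cong refl) (simp add: Q_u[OF wd])

lemma hm_dim: "dim_row (hashimoto_mat E w) = card E"
  by (simp add: hashimoto_mat_def)

lemma spec_rad_eq: "card E > 0 \<Longrightarrow> spec_rad (hashimoto_mat E w) = spectral_radius (hashimoto_mat E w)"
  unfolding spec_rad_def hm_dim by simp

lemma spec_rad_nonneg: "spec_rad (hashimoto_mat E w) \<ge> 0"
proof (cases "card E = 0")
  case True thus ?thesis by (simp add: spec_rad_def hashimoto_mat_def)
next
  case False
  from spectral_radius_mem_max(1)[OF hm_carrier[of E w]] False
  have "spectral_radius (hashimoto_mat E w) \<in> norm ` spectrum (hashimoto_mat E w)" by simp
  then obtain x :: complex where "spectral_radius (hashimoto_mat E w) = norm x" by blast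
  thus ?thesis using spec_rad_eq[of E w] False by simp
qed

lemma Vp_bound:
  fixes E :: "('v::finite \<times> 'v) set"
  assumes r: "r > spec_rad (hashimoto_mat E w)"
  shows "\<exists>C\<ge>0. \<forall>k g f. g \<in> E \<longrightarrow> f \<in> E \<longrightarrow> \<bar>Vp E w k g f\<bar> \<le> C * r^k"
proof -
  let ?M = "hashimoto_mat E w" and ?N = "card E" and ?es = "edge_list E"
  have r0: "r > 0" using r spec_rad_nonneg[of E w] by linarith
  have "?N > 0 \<Longrightarrow> spectral_radius ?M < r" using r spec_rad_eq[of E w] by simp
  from spec_upper[OF hm_carrier r0 this] obtain C where
    C: "\<And>k a b. a < ?N \<Longrightarrow> b < ?N \<Longrightarrow> norm ((?M ^\<^sub>m k) $$ (a,b)) \<le> C * r^k" by blast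
  have fin: "finite E" by simp
  show ?thesis
  proof (intro exI[of _ "max C 0"] conjI allI impI)
    fix k g f assume g: "g \<in> E" and f: "f \<in> E"
    obtain a where a: "a < ?N" "g = ?es ! a"
      using g edge_list[OF fin] edge_list_len[OF fin] by (metis in_set_conv_nth)
    obtain b where b: "b < ?N" "f = ?es ! b"
      using f edge_list[OF fin] edge_list_len[OF fin] by (metis in_set_conv_nth)
    have "\<bar>Vp E w k g f\<bar> = norm ((?M ^\<^sub>m k) $$ (a,b))"
      using mat_Vp[OF fin a(1) b(1)] a b by simp
    also have "\<dots> \<le> C * r^k" by (rule C[OF a(1) b(1)])
    also have "\<dots> \<le> max C 0 * r^k" using r0 by (intro mult_right_mono) auto
    finally show "\<bar>Vp E w k g f\<bar> \<le> max C 0 * r^k" .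
  qed simp
qed

lemma norm_le_entries: "norm (x :: real^'n^'m) \<le> (\<Sum>i\<in>UNIV. \<Sum>j\<in>UNIV. \<bar>x $ i $ j\<bar>)"
proof -
  have "norm x \<le> (\<Sum>i\<in>UNIV. norm (x $ i))" by (simp add: norm_vec_def L2_set_le_sum)
  also have "\<dots> \<le> (\<Sum>i\<in>UNIV. \<Sum>j\<in>UNIV. \<bar>x $ i $ j\<bar>)"
    by (intro sum_mono) (simp add: norm_le_l1_cart)
  finally show ?thesis .
qed

lemma entry_le_norm: "\<bar>(x :: real^'n^'m) $ i $ j\<bar> \<le> norm x"
proof -
  have "norm (x $ i) \<le> norm x" by (rule Finite_Cartesian_Product.norm_nth_le)
  moreover have "\<bar>(x $ i) $ j\<bar> \<le> norm (x $ i)" by (rule component_le_norm_cart)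
  ultimately show ?thesis by linarith
qed

lemma p_upper:
  fixes E :: "('v::finite \<times> 'v) set"
  assumes wd: "weighted_digraph E w" and r: "r > spec_rad (hashimoto_mat E w)"
  shows "\<exists>D>0. \<forall>n\<ge>1. norm (nb_matrix E w n) \<le> D * r^n"
proof -
  have r0: "r > 0" using r spec_rad_nonneg[of E w] by linarith
  from Vp_bound[OF r] obtain C where C0: "C \<ge> 0"
    and C: "\<And>k g f. g \<in> E \<Longrightarrow> f \<in> E \<Longrightarrow> \<bar>Vp E w k g f\<bar> \<le> C * r^k" by blast
  define S where "S = (\<Sum>e\<in>E. sqrt (w e))"
  have S0: "S \<ge> 0" unfolding S_def using wpos[OF wd] by (intro sum_nonneg) (simp add: less_imp_le)
  define B where "B = S * S * C"
  have B0: "B \<ge> 0" unfolding B_def using S0 C0 by simp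
  have ent: "\<bar>nb_matrix E w (Suc k) $ i $ j\<bar> \<le> B * r^k" for k i j
  proof -
    have uu: "\<bar>uu E w k i f\<bar> \<le> S * (C * r^k)" if f: "f \<in> E" for f
    proof -
      have "\<bar>uu E w k i f\<bar> \<le> (\<Sum>g\<in>E. \<bar>(if fst g = i then sqrt (w g) else 0) * Vp E w k g f\<bar>)"
        unfolding uu_def by (rule sum_abs)
      also have "\<dots> \<le> (\<Sum>g\<in>E. sqrt (w g) * (C * r^k))"
        using wpos[OF wd] C0 r0 by (intro sum_mono) (auto simp: abs_mult less_imp_le intro!: mult_mono C f)
      finally show ?thesis unfolding S_def by (simp add: sum_distrib_right)
    qed
    have "\<bar>nb_matrix E w (Suc k) $ i $ j\<bar> \<le> (\<Sum>f\<in>E. \<bar>if snd f = j then sqrt (w f) * uu E w k i f else 0\<bar>)"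
      unfolding p_formula[OF wd] by (rule sum_abs)
    also have "\<dots> \<le> (\<Sum>f\<in>E. sqrt (w f) * (S * (C * r^k)))"
      using wpos[OF wd] C0 r0 S0 by (intro sum_mono) (auto simp: abs_mult less_imp_le intro!: mult_left_mono uu)
    also have "(\<Sum>f\<in>E. sqrt (w f) * (S * (C * r^k))) = S * (S * (C * r^k))"
      unfolding S_def by (rule sum_distrib_right[symmetric])
    finally show ?thesis unfolding B_def by (simp add: mult_ac)
  qed
  define D where "D = (real CARD('v) * real CARD('v) * B) / r + 1"
  have "real CARD('v) * real CARD('v) * B / r \<ge> 0" using B0 r0 by simp
  hence D0: "D > 0" unfolding D_def by linarith
  show ?thesis
  proof (intro exI[of _ D] conjI allI impI D0)
    fix n :: nat assume n: "n \<ge> 1"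
    then obtain k where nk: "n = Suc k" by (cases n) auto
    have "norm (nb_matrix E w n) \<le> (\<Sum>i\<in>(UNIV::'v set). \<Sum>j\<in>(UNIV::'v set). B * r^k)"
    proof -
      have "(\<Sum>i\<in>UNIV. \<Sum>j\<in>UNIV. \<bar>nb_matrix E w (Suc k) $ i $ j\<bar>) \<le> (\<Sum>i\<in>(UNIV::'v set). \<Sum>j\<in>(UNIV::'v set). B * r^k)"
        by (intro sum_mono) (rule ent)
      thus ?thesis unfolding nk using norm_le_entries[of "nb_matrix E w (Suc k)"] by (meson order_trans)
    qed
    also have "\<dots> = (real CARD('v) * real CARD('v) * B) / r * r^n"
      using r0 unfolding nk by simp
    also have "\<dots> \<le> D * r^n" unfolding D_def using r0 by (simp add: distrib_right)
    finally show "norm (nb_matrix E w n) \<le> D * r^n" .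
  qed
qed



lemma uu_nonneg: "weighted_digraph E w \<Longrightarrow> f \<in> E \<Longrightarrow> uu E w k i f \<ge> 0"
  unfolding uu_def
  by (intro sum_nonneg mult_nonneg_nonneg) (auto intro: Vp_nonneg simp: less_imp_le wpos)

lemma p_lower:
  fixes E :: "('v::finite \<times> 'v) set"
  assumes wd: "weighted_digraph E w" and rho: "spec_rad (hashimoto_mat E w) > 0"
  shows "\<exists>c>0. \<forall>n\<ge>1. c * spec_rad (hashimoto_mat E w) ^ n \<le> norm (nb_matrix E w n)"
proof -
  let ?M = "hashimoto_mat E w" and ?N = "card E" and ?es = "edge_list E"
  define \<rho> where "\<rho> = spec_rad ?M"
  have fin: "finite E" by simp
  have N: "?N > 0"
  proof (rule ccontr)
    assume "\<not> ?N > 0" hence "spec_rad ?M = 0" unfolding spec_rad_def hm_dim by simp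
    with rho show False by simp
  qed
  hence Ene: "E \<noteq> {}" by auto
  have rs: "\<rho> = spectral_radius ?M" unfolding \<rho>_def using spec_rad_eq[OF N] .
  have r0: "\<rho> > 0" using rho unfolding \<rho>_def .
  define m where "m = Min ((\<lambda>e. sqrt (w e)) ` E)"
  have m0: "m > 0" unfolding m_def using Ene wpos[OF wd] by (subst Min_gr_iff) auto
  have mle: "m \<le> sqrt (w e)" if "e \<in> E" for e unfolding m_def using that by (intro Min_le) auto
  define c where "c = m * m / (real ?N * \<rho>)"
  have c0: "c > 0" unfolding c_def using m0 N r0 by simp
  show ?thesis unfolding \<rho>_def[symmetric]
  proof (intro exI[of _ c] conjI allI impI c0)
    fix n :: nat assume n: "n \<ge> 1"
    then obtain k where nk: "n = Suc k" by (cases n) auto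
    from spec_lower[OF hm_carrier[of E w] N, where k=k] obtain a b where ab: "a < ?N" "b < ?N"
      and le: "spectral_radius ?M ^ k \<le> real ?N * norm ((?M ^\<^sub>m k) $$ (a,b))" by blast
    define g where "g = ?es ! a"
    define f where "f = ?es ! b"
    have g: "g \<in> E" unfolding g_def using ab edge_list[OF fin] edge_list_len[OF fin] by (metis nth_mem)
    have f: "f \<in> E" unfolding f_def using ab edge_list[OF fin] edge_list_len[OF fin] by (metis nth_mem)
    have Vn: "norm ((?M ^\<^sub>m k) $$ (a,b)) = Vp E w k g f"
      unfolding mat_Vp[OF fin ab] g_def f_def using Vp_nonneg[OF wd f] by (simp add: f_def g_def)
    have "sqrt (w f) * uu E w k (fst g) f \<le> nb_matrix E w (Suc k) $ fst g $ snd f"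
    proof -
      have "(\<lambda>f'. if snd f' = snd f then sqrt (w f') * uu E w k (fst g) f' else 0) f
          \<le> (\<Sum>f'\<in>E. if snd f' = snd f then sqrt (w f') * uu E w k (fst g) f' else 0)"
      proof (rule member_le_sum[OF f])
        fix x assume "x \<in> E - {f}"
        hence "x \<in> E" by simp
        thus "0 \<le> (if snd x = snd f then sqrt (w x) * uu E w k (fst g) x else 0)"
          using uu_nonneg[OF wd \<open>x \<in> E\<close>, of k "fst g"] wpos[OF wd \<open>x \<in> E\<close>] by (simp add: mult_nonneg_nonneg)
      qed simp
      thus ?thesis unfolding p_formula[OF wd] by simp
    qed
    moreover have "sqrt (w g) * Vp E w k g f \<le> uu E w k (fst g) f"
    proof -
      have "(\<lambda>g'. (if fst g' = fst g then sqrt (w g') else 0) * Vp E w k g' f) g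
          \<le> (\<Sum>g'\<in>E. (if fst g' = fst g then sqrt (w g') else 0) * Vp E w k g' f)"
      proof (rule member_le_sum[OF g])
        fix x assume "x \<in> E - {g}"
        hence x: "x \<in> E" by simp
        thus "0 \<le> (if fst x = fst g then sqrt (w x) else 0) * Vp E w k x f"
          using Vp_nonneg[OF wd f, of k x] wpos[OF wd x] by (simp add: mult_nonneg_nonneg)
      qed simp
      thus ?thesis unfolding uu_def by simp
    qed
    ultimately have "sqrt (w f) * (sqrt (w g) * Vp E w k g f) \<le> nb_matrix E w (Suc k) $ fst g $ snd f"
      by (meson order_trans mult_left_mono real_sqrt_ge_zero wpos[OF wd f] less_imp_le)
    moreover have "m * m * Vp E w k g f \<le> sqrt (w f) * (sqrt (w g) * Vp E w k g f)"
    proof -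
      have "m * m \<le> sqrt (w f) * sqrt (w g)" using mle[OF f] mle[OF g] m0 wpos[OF wd f] by (intro mult_mono) auto
      hence "m * m * Vp E w k g f \<le> sqrt (w f) * sqrt (w g) * Vp E w k g f"
        using Vp_nonneg[OF wd f, of k g] by (rule mult_right_mono)
      thus ?thesis by (simp only: mult.assoc)
    qed
    moreover have "\<rho>^k \<le> real ?N * Vp E w k g f" using le Vn rs by simp
    ultimately have "m * m * (\<rho>^k / real ?N) \<le> nb_matrix E w (Suc k) $ fst g $ snd f"
    proof -
      assume a1: "sqrt (w f) * (sqrt (w g) * Vp E w k g f) \<le> nb_matrix E w (Suc k) $ fst g $ snd f"
        and a2: "m * m * Vp E w k g f \<le> sqrt (w f) * (sqrt (w g) * Vp E w k g f)"
        and a3: "\<rho>^k \<le> real ?N * Vp E w k g f"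
      have "\<rho>^k / real ?N \<le> Vp E w k g f" using a3 N by (simp add: divide_le_eq mult.commute)
      hence "m * m * (\<rho>^k / real ?N) \<le> m * m * Vp E w k g f" using m0 by (intro mult_left_mono) auto
      thus ?thesis using a1 a2 by linarith
    qed
    moreover have "c * \<rho> ^ n = m * m * (\<rho>^k / real ?N)" unfolding c_def nk using r0 by simp
    ultimately show "c * \<rho> ^ n \<le> norm (nb_matrix E w n)"
      using entry_le_norm[of "nb_matrix E w (Suc k)" "fst g" "snd f"] unfolding nk by linarith
  qed
qed



lemma root_lim: "D > 0 \<Longrightarrow> (\<lambda>n. ereal (root n D * r)) \<longlonglongrightarrow> ereal r"
proof -
  assume D: "D > 0"
  have "(\<lambda>n. root n D * r) \<longlonglongrightarrow> 1 * r" by (intro tendsto_mult LIMSEQ_root_const[OF D] tendsto_const)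
  thus ?thesis by simp
qed

lemma root_prod: "n > 0 \<Longrightarrow> r \<ge> 0 \<Longrightarrow> root n (D * r^n) = root n D * r"
  by (simp add: real_root_mult real_root_power_cancel)

lemma ls_upper:
  assumes D: "D > 0" and r: "r \<ge> 0" and b: "\<And>n. n \<ge> 1 \<Longrightarrow> x n \<le> D * r^n"
  shows "limsup (\<lambda>n. ereal (root n (x n))) \<le> ereal r"
proof -
  have ev: "eventually (\<lambda>n. ereal (root n (x n)) \<le> ereal (root n D * r)) sequentially"
    using eventually_ge_at_top[of 1]
  proof (rule eventually_mono)
    fix n :: nat assume n: "n \<ge> 1"
    have "root n (x n) \<le> root n (D * r^n)" using n b[OF n] by (intro real_root_le_mono) auto
    thus "ereal (root n (x n)) \<le> ereal (root n D * r)" using root_prod[of n r D] n r by simp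
  qed
  have "limsup (\<lambda>n. ereal (root n (x n))) \<le> limsup (\<lambda>n. ereal (root n D * r))"
    by (rule Limsup_mono[OF ev])
  also have "\<dots> = ereal r" by (rule lim_imp_Limsup[OF trivial_limit_sequentially root_lim[OF D]])
  finally show ?thesis .
qed

lemma ls_lower:
  assumes c: "c > 0" and r: "r \<ge> 0" and b: "\<And>n. n \<ge> 1 \<Longrightarrow> c * r^n \<le> x n"
  shows "ereal r \<le> limsup (\<lambda>n. ereal (root n (x n)))"
proof -
  have ev: "eventually (\<lambda>n. ereal (root n c * r) \<le> ereal (root n (x n))) sequentially"
    using eventually_ge_at_top[of 1]
  proof (rule eventually_mono)
    fix n :: nat assume n: "n \<ge> 1"
    have "root n (c * r^n) \<le> root n (x n)" using n b[OF n] by (intro real_root_le_mono) auto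
    thus "ereal (root n c * r) \<le> ereal (root n (x n))" using root_prod[of n r c] n r by simp
  qed
  have "ereal r = limsup (\<lambda>n. ereal (root n c * r))"
    by (rule lim_imp_Limsup[OF trivial_limit_sequentially root_lim[OF c], symmetric])
  also have "\<dots> \<le> limsup (\<lambda>n. ereal (root n (x n)))" by (rule Limsup_mono[OF ev])
  finally show ?thesis .
qed

theorem theorem5p2:
  fixes E :: "('v::finite \<times> 'v) set" and w :: "'v \<times> 'v \<Rightarrow> real"
  assumes "weighted_digraph E w"
  shows "conv_radius (nb_matrix E w) =
           (if spec_rad (hashimoto_mat E w) = 0 then \<infinity>
            else ereal (1 / spec_rad (hashimoto_mat E w)))"
proof -
  note wd = assms
  define \<rho> where "\<rho> = spec_rad (hashimoto_mat E w)"
  have r0: "\<rho> \<ge> 0" unfolding \<rho>_def by (rule spec_rad_nonneg)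
  let ?a = "\<lambda>n. ereal (root n (norm (nb_matrix E w n)))"
  have up: "limsup ?a \<le> ereal \<rho>"
  proof (rule ereal_le_epsilon2)
    fix e :: real assume e: "e > 0"
    have "\<rho> + e > spec_rad (hashimoto_mat E w)" using e unfolding \<rho>_def by simp
    from p_upper[OF wd this] obtain D where D: "D > 0"
      and b: "\<And>n. n \<ge> 1 \<Longrightarrow> norm (nb_matrix E w n) \<le> D * (\<rho> + e)^n" by blast
    have "limsup ?a \<le> ereal (\<rho> + e)" using ls_upper[OF D _ b] r0 e by simp
    thus "limsup ?a \<le> ereal \<rho> + ereal e" by simp
  qed
  have lo: "ereal \<rho> \<le> limsup ?a"
  proof (cases "\<rho> = 0")
    case True
    have "ereal 0 \<le> limsup ?a" by (rule ls_lower[of 1]) (auto simp: power_0_left)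
    thus ?thesis using True by simp
  next
    case False
    hence "spec_rad (hashimoto_mat E w) > 0" using r0 unfolding \<rho>_def by simp
    from p_lower[OF wd this] obtain c where c: "c > 0"
      and b: "\<And>n. n \<ge> 1 \<Longrightarrow> c * \<rho>^n \<le> norm (nb_matrix E w n)" unfolding \<rho>_def by blast
    show ?thesis by (rule ls_lower[OF c r0 b])
  qed
  have eq: "limsup ?a = ereal \<rho>" using up lo by simp
  show ?thesis unfolding conv_radius_def eq \<rho>_def[symmetric] by (simp add: divide_inverse)
qed


end
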